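(* Let $M$ be an even positive integer, $m=\lceil\log_2M\rceil$, and let $h_0,\dots,h_{M-1}$ be the filter coefficients of a wavelet of order $M$, with $h:=\sum_{\ell=0}^{M-1}|h_\ell|$. Then: (i) an $m$-qubit unitary LINPREP with $\mathrm{LINPREP}|0^m\rangle=\sum_{\ell=0}^{M-1}h_\ell|\ell\rangle$ can be executed using $\mathcal{O}(M\log_2M)$ elementary gates and $\lceil\log_2M\rceil$ borrowed qubits; (ii) $m$-qubit unitaries PREP and UNPREP with $\mathrm{PREP}|0^m\rangle=\frac{1}{\sqrt h}\sum_{\ell=0}^{M-1}\sqrt{|h_\ell|}\,|\ell\rangle$ and $\mathrm{UNPREP}^\dagger|0^m\rangle=\frac{1}{\sqrt h}\sum_{\ell=0}^{M-1}\mathrm{sign}(h_\ell)\sqrt{|h_\ell|}\,|\ell\rangle$ can each be executed using $\mathcal{O}(M^{3/2})$ elementary gates and one ancilla qubit.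
   Context: Wavelet of order $M$: real filter coefficients $h_0,\dots,h_{M-1}$ with $\sum_\ell h_\ell=\sqrt2$ and $\sum_\ell h_\ell^2=1$ (coming from an orthonormal wavelet). Elementary gates include arbitrary single-qubit gates (rotations with classically precomputed angles) and CNOT. An ancilla qubit starts and ends in $|0\rangle$; a borrowed qubit may start in any state and is returned to its original state. *)

theory Defs
  imports Complex_Main "Jordan_Normal_Form.Matrix"
begin

text \<open>An n-qubit state is a complex vector of dimension 2^n; the computational
  basis state with index x has qubit j equal to bit j of x (x div 2^j mod 2).
  Operators are complex 2^n x 2^n matrices.\<close>

definition qbit :: "nat \<Rightarrow> nat \<Rightarrow> nat" where
  "qbit x j = x div 2 ^ j mod 2"

definition flip_bit :: "nat \<Rightarrow> nat \<Rightarrow> nat" where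
  "flip_bit t y = (if qbit y t = 0 then y + 2 ^ t else y - 2 ^ t)"

definition cadj :: "complex mat \<Rightarrow> complex mat" where
  "cadj A = mat (dim_col A) (dim_row A) (\<lambda>(i, j). cnj (A $$ (j, i)))"

definition unitary_mat :: "nat \<Rightarrow> complex mat \<Rightarrow> bool" where
  "unitary_mat d U \<longleftrightarrow> U \<in> carrier_mat d d \<and> cadj U * U = 1\<^sub>m d"

datatype gate = SQ "complex mat" nat | CNOT nat nat

fun valid_gate :: "nat \<Rightarrow> gate \<Rightarrow> bool" where
  "valid_gate n (SQ U i) \<longleftrightarrow> unitary_mat 2 U \<and> i < n"
| "valid_gate n (CNOT c t) \<longleftrightarrow> c < n \<and> t < n \<and> c \<noteq> t"

fun gate_mat :: "nat \<Rightarrow> gate \<Rightarrow> complex mat" where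
  "gate_mat n (SQ U i) = mat (2 ^ n) (2 ^ n) (\<lambda>(x, y).
      if (\<forall>j<n. j \<noteq> i \<longrightarrow> qbit x j = qbit y j) then U $$ (qbit x i, qbit y i) else 0)"
| "gate_mat n (CNOT c t) = mat (2 ^ n) (2 ^ n) (\<lambda>(x, y).
      if x = (if qbit y c = 1 then flip_bit t y else y) then 1 else 0)"

text \<open>A circuit is a list of gates, applied left to right (first gate first).\<close>
definition circuit_mat :: "nat \<Rightarrow> gate list \<Rightarrow> complex mat" where
  "circuit_mat n gs = foldl (\<lambda>A g. gate_mat n g * A) (1\<^sub>m (2 ^ n)) gs"

definition valid_circuit :: "nat \<Rightarrow> gate list \<Rightarrow> bool" where
  "valid_circuit n gs \<longleftrightarrow> (\<forall>g\<in>set gs. valid_gate n g)"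

text \<open>Circuit gs on m+k qubits (system = qubits 0..m-1, extra = qubits m..m+k-1)
  executes the m-qubit unitary U using k borrowed qubits: for every system basis
  state s and every basis state a of the borrowed register,
  gs |s>|a> = (U|s>)|a>  (hence, by linearity, for arbitrary states).\<close>
definition executes_borrowed :: "nat \<Rightarrow> nat \<Rightarrow> gate list \<Rightarrow> complex mat \<Rightarrow> bool" where
  "executes_borrowed m k gs U \<longleftrightarrow> valid_circuit (m + k) gs \<and>
     (\<forall>s<2 ^ m. \<forall>a<2 ^ k.
        circuit_mat (m + k) gs *\<^sub>v unit_vec (2 ^ (m + k)) (s + 2 ^ m * a)
        = vec (2 ^ (m + k)) (\<lambda>x. if x div 2 ^ m = a then U $$ (x mod 2 ^ m, s) else 0))"

text \<open>Same with k ancilla qubits, which start and end in |0>.\<close>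
definition executes_ancilla :: "nat \<Rightarrow> nat \<Rightarrow> gate list \<Rightarrow> complex mat \<Rightarrow> bool" where
  "executes_ancilla m k gs U \<longleftrightarrow> valid_circuit (m + k) gs \<and>
     (\<forall>s<2 ^ m.
        circuit_mat (m + k) gs *\<^sub>v unit_vec (2 ^ (m + k)) s
        = vec (2 ^ (m + k)) (\<lambda>x. if x div 2 ^ m = 0 then U $$ (x mod 2 ^ m, s) else 0))"

definition wavelet_filter :: "nat \<Rightarrow> (nat \<Rightarrow> real) \<Rightarrow> bool" where
  "wavelet_filter M h \<longleftrightarrow> (\<Sum>l<M. h l) = sqrt 2 \<and> (\<Sum>l<M. (h l)\<^sup>2) = 1"

definition padded_vec :: "nat \<Rightarrow> nat \<Rightarrow> (nat \<Rightarrow> complex) \<Rightarrow> complex vec" where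
  "padded_vec m M f = vec (2 ^ m) (\<lambda>l. if l < M then f l else 0)"

end

theory Submission
  imports Defs "Jordan_Normal_Form.Determinant"
begin

definition setb :: "nat \<Rightarrow> nat \<Rightarrow> nat \<Rightarrow> nat" where
  "setb x i b = (if b = 0 then unset_bit i x else set_bit i x)"

lemma qbit_bit: "qbit x j = of_bool (bit x j)"
  by (simp add: qbit_def bit_nat_def odd_iff_mod_2_eq_one)

lemma qbit_le1: "qbit x j \<le> 1" by (simp add: qbit_bit)

lemma bit_setb: "bit (setb x i b) j = (if j = i then b \<noteq> 0 else bit x j)"
  by (auto simp: setb_def bit_simps)

lemma qbit_setb: "b \<le> 1 \<Longrightarrow> qbit (setb x i b) j = (if j = i then b else qbit x j)"
  by (auto simp: qbit_bit bit_setb)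

lemma nat_bits_eq: "(\<And>j. qbit x j = qbit y j) \<Longrightarrow> (x::nat) = y"
  by (rule bit_eqI) (metis qbit_bit of_bool_eq_iff)

lemma qbit_big: "(x::nat) < 2 ^ n \<Longrightarrow> n \<le> j \<Longrightarrow> qbit x j = 0"
proof -
  assume "x < 2^n" "n \<le> j"
  then have "x < 2^j" by (meson order_less_le_trans one_le_numeral power_increasing)
  then show ?thesis by (simp add: qbit_def)
qed

lemma nat_bits_eq_bound: "(x::nat) < 2^n \<Longrightarrow> y < 2^n \<Longrightarrow> (\<And>j. j < n \<Longrightarrow> qbit x j = qbit y j) \<Longrightarrow> x = y"
  by (rule nat_bits_eq) (metis not_le qbit_big)

lemma setb_self: "setb x i (qbit x i) = x"
  by (rule bit_eqI) (auto simp: setb_def bit_simps qbit_bit)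

lemma setb_setb: "b' \<le> 1 \<Longrightarrow> setb (setb x i b) i b' = setb x i b'"
  by (auto simp: setb_def bit_eq_iff bit_simps)

lemma setb_comm: "i \<noteq> j \<Longrightarrow> setb (setb x i b) j b' = setb (setb x j b') i b"
  by (auto simp: setb_def bit_eq_iff bit_simps)

lemma setb_less: assumes "x < 2^n" "i < n" shows "setb x i b < 2^n"
proof -
  have "bit (setb x i b) j \<Longrightarrow> j < n" for j
  proof -
    assume a: "bit (setb x i b) j"
    show "j < n"
    proof (cases "j = i")
      case True then show ?thesis using assms by simp
    next
      case False
      then have "bit x j" using a by (simp add: bit_setb)
      then show ?thesis using qbit_big[OF assms(1), of j] by (cases "j < n") (auto simp: qbit_bit)
    qed
  qed
  then have "take_bit n (setb x i b) = setb x i b"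
    by (auto simp: bit_eq_iff bit_take_bit_iff)
  then show ?thesis by (metis take_bit_nat_eq_self_iff)
qed

lemma unset_bit_minus: assumes "bit (y::nat) t" shows "y - 2^t = unset_bit t y"
proof -
  have "set_bit t (unset_bit t y) = unset_bit t y + 2^t"
    by (simp add: set_bit_eq bit_simps)
  moreover have "set_bit t (unset_bit t y) = y"
    using assms by (intro bit_eqI) (auto simp: bit_simps)
  ultimately show ?thesis by simp
qed

lemma flip_bit_setb: "flip_bit t y = setb y t (1 - qbit y t)"
  by (auto simp: flip_bit_def setb_def qbit_bit set_bit_eq unset_bit_minus)

definition agree :: "nat \<Rightarrow> nat \<Rightarrow> nat \<Rightarrow> nat \<Rightarrow> bool" where
  "agree n i x y = (\<forall>j<n. j \<noteq> i \<longrightarrow> qbit x j = qbit y j)"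

definition cperm :: "nat \<Rightarrow> nat \<Rightarrow> nat \<Rightarrow> nat" where
  "cperm c t x = (if qbit x c = 1 then flip_bit t x else x)"

fun gsem :: "gate \<Rightarrow> (nat \<Rightarrow> complex) \<Rightarrow> nat \<Rightarrow> complex" where
  "gsem (SQ U i) f x = U $$ (qbit x i, 0) * f (setb x i 0) + U $$ (qbit x i, 1) * f (setb x i 1)"
| "gsem (CNOT c t) f x = f (cperm c t x)"

fun wf_gate :: "nat \<Rightarrow> gate \<Rightarrow> bool" where
  "wf_gate n (SQ U i) \<longleftrightarrow> U \<in> carrier_mat 2 2 \<and> i < n"
| "wf_gate n (CNOT c t) \<longleftrightarrow> c < n \<and> t < n \<and> c \<noteq> t"

lemma valid_wf: "valid_gate n g \<Longrightarrow> wf_gate n g"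
  by (cases g) (auto simp: unitary_mat_def)

lemma qbit_cases: "qbit x i = 0 \<or> qbit x i = 1"
  using qbit_le1[of x i] by linarith

lemma sum_SQ:
  assumes x: "x < 2^n" and i: "i < n"
  shows "(\<Sum>y<2^n. if agree n i x y then F (qbit y i) y else 0) = F 0 (setb x i 0) + F 1 (setb x i 1)"
proof -
  let ?g = "\<lambda>y. if agree n i x y then F (qbit y i) y else 0"
  let ?A = "{setb x i 0, setb x i 1}"
  have sub: "?A \<subseteq> {..<2^n}" using setb_less[OF x i] by auto
  have z: "\<forall>y\<in>{..<2^n} - ?A. ?g y = 0"
  proof
    fix y assume y: "y \<in> {..<2^n} - ?A"
    show "?g y = 0"
    proof (rule ccontr)
      assume "?g y \<noteq> 0"
      then have ag: "agree n i x y" by (auto split: if_splits)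
      define b where "b = qbit y i"
      have b1: "b \<le> 1" unfolding b_def by (rule qbit_le1)
      have bits: "qbit y j = qbit (setb x i b) j" if j: "j<n" for j
      proof (cases "j = i")
        case True
        then show ?thesis using qbit_setb[OF b1, of x i j] b_def by simp
      next
        case False
        then have "qbit x j = qbit y j" using ag j unfolding agree_def by blast
        then show ?thesis using qbit_setb[OF b1, of x i j] False by simp
      qed
      have e: "y = setb x i b"
        by (rule nat_bits_eq_bound[of _ n]) (use y setb_less[OF x i, of b] bits in auto)
      show False using y qbit_cases[of y i] e unfolding b_def[symmetric] by auto
    qed
  qed
  have ne: "setb x i 0 \<noteq> setb x i 1"
  proof
    assume "setb x i 0 = setb x i 1"
    then have "qbit (setb x i 0) i = qbit (setb x i 1) i" by simp
    then show False by (simp add: qbit_setb)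
  qed
  have a0: "agree n i x (setb x i 0)" and a1: "agree n i x (setb x i 1)"
    by (simp_all add: agree_def qbit_setb)
  have "sum ?g {..<2^n} = sum ?g ?A"
    by (rule sum.mono_neutral_right[OF _ sub z]) simp
  also have "\<dots> = ?g (setb x i 0) + ?g (setb x i 1)"
    using ne by simp
  also have "\<dots> = F 0 (setb x i 0) + F 1 (setb x i 1)"
    using a0 a1 by (simp add: qbit_setb)
  finally show ?thesis .
qed

lemma cperm_less: "x < 2^n \<Longrightarrow> t < n \<Longrightarrow> cperm c t x < 2^n"
  by (simp add: cperm_def flip_bit_setb setb_less)

lemma qbit_cperm_c: "c \<noteq> t \<Longrightarrow> qbit (cperm c t x) c = qbit x c"
  by (simp add: cperm_def flip_bit_setb qbit_setb)

lemma cperm_cperm: "c \<noteq> t \<Longrightarrow> cperm c t (cperm c t x) = x"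
proof -
  assume ct: "c \<noteq> t"
  show ?thesis
  proof (cases "qbit x c = 1")
    case True
    have "cperm c t (cperm c t x) = flip_bit t (flip_bit t x)"
      using True ct qbit_cperm_c[OF ct, of x] by (simp add: cperm_def)
    also have "\<dots> = x"
    proof -
      have q: "Suc 0 - (Suc 0 - qbit x t) = qbit x t" using qbit_le1[of x t] by simp
      show ?thesis by (simp add: flip_bit_setb qbit_setb setb_setb[OF qbit_le1] setb_self q)
    qed
    finally show ?thesis .
  qed (simp add: cperm_def)
qed

lemma cperm_eq: assumes ct: "c \<noteq> t" shows "(x = cperm c t y) = (y = cperm c t x)"
proof
  assume "x = cperm c t y" then show "y = cperm c t x" using cperm_cperm[OF ct, of y] by simp
next
  assume "y = cperm c t x" then show "x = cperm c t y" using cperm_cperm[OF ct, of x] by simp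
qed

lemma gate_carrier: "gate_mat n g \<in> carrier_mat (2^n) (2^n)"
  by (cases g) auto

lemma mat_vec_sum: "A \<in> carrier_mat N N \<Longrightarrow> dim_vec v = N \<Longrightarrow> x < N \<Longrightarrow>
  (A *\<^sub>v v) $ x = (\<Sum>y<N. A $$ (x,y) * v $ y)"
  by (auto simp: scalar_prod_def atLeast0LessThan intro!: sum.cong)

lemma gate_apply:
  assumes g: "wf_gate n g" and v: "dim_vec v = 2^n" and x: "x < 2^n"
  shows "(gate_mat n g *\<^sub>v v) $ x = gsem g (($) v) x"
proof (cases g)
  case (SQ U i)
  have "(gate_mat n g *\<^sub>v v) $ x = (\<Sum>y<2^n. (if agree n i x y then U $$ (qbit x i, qbit y i) else 0) * v $ y)"
    using x v by (simp add: SQ scalar_prod_def agree_def atLeast0LessThan)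
  also have "\<dots> = (\<Sum>y<2^n. if agree n i x y then U $$ (qbit x i, qbit y i) * v $ y else 0)"
    by (rule sum.cong) auto
  also have "\<dots> = U $$ (qbit x i, 0) * v $ (setb x i 0) + U $$ (qbit x i, 1) * v $ (setb x i 1)"
    using sum_SQ[OF x, of i "\<lambda>b y. U $$ (qbit x i, b) * v $ y"] g SQ by simp
  finally show ?thesis using SQ by simp
next
  case (CNOT c t)
  have ct: "c \<noteq> t" "t < n" using g CNOT by auto
  have "(gate_mat n g *\<^sub>v v) $ x = (\<Sum>y<2^n. gate_mat n g $$ (x,y) * v $ y)"
    using mat_vec_sum[OF gate_carrier v x] .
  also have "\<dots> = (\<Sum>y<2^n. (if x = cperm c t y then 1 else 0) * v $ y)"
  proof (rule sum.cong[OF refl])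
    fix y :: nat assume y: "y \<in> {..<2^n}"
    have "gate_mat n g $$ (x,y) = (if x = cperm c t y then 1 else 0)"
      using x y unfolding CNOT cperm_def by simp
    then show "gate_mat n g $$ (x,y) * v $ y = (if x = cperm c t y then 1 else 0) * v $ y" by simp
  qed
  also have "\<dots> = (\<Sum>y<2^n. if y = cperm c t x then v $ y else 0)"
  proof (rule sum.cong[OF refl])
    fix y
    show "(if x = cperm c t y then 1 else 0) * v $ y = (if y = cperm c t x then v $ y else 0)"
      using cperm_eq[OF ct(1), of x y] by simp
  qed
  also have "\<dots> = v $ (cperm c t x)"
    using cperm_less[OF x ct(2)] by (simp add: sum.delta)
  finally show ?thesis using CNOT by simp
qed

lemma gsem_local:
  assumes g: "wf_gate n g" and x: "x < 2^n" and f: "\<And>y. y < 2^n \<Longrightarrow> f y = f' y"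
  shows "gsem g f x = gsem g f' x"
proof (cases g)
  case (SQ U i)
  then show ?thesis using g x f setb_less[OF x, of i] by simp
next
  case (CNOT c t)
  then show ?thesis using g x f cperm_less[OF x, of t c] by simp
qed

lemma gate_vec:
  assumes g: "wf_gate n g" and v: "v \<in> carrier_vec (2^n)"
  shows "gate_mat n g *\<^sub>v v = vec (2^n) (gsem g (($) v))"
  by (intro eq_vecI) (use gate_apply[OF g] v gate_carrier[of n g] in auto)

definition csem :: "gate list \<Rightarrow> (nat \<Rightarrow> complex) \<Rightarrow> nat \<Rightarrow> complex" where
  "csem gs f = foldl (\<lambda>f g. gsem g f) f gs"

lemma csem_Nil[simp]: "csem [] f = f" by (simp add: csem_def)
lemma csem_append[simp]: "csem (gs @ hs) f = csem hs (csem gs f)" by (simp add: csem_def)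
lemma csem_Cons[simp]: "csem (g # hs) f = csem hs (gsem g f)" by (simp add: csem_def)

lemma circuit_snoc: "circuit_mat n (gs @ [g]) = gate_mat n g * circuit_mat n gs"
  by (simp add: circuit_mat_def)

lemma circuit_carrier: "circuit_mat n gs \<in> carrier_mat (2^n) (2^n)"
  by (induction gs rule: rev_induct) (auto simp: circuit_snoc intro: mult_carrier_mat[OF gate_carrier], simp add: circuit_mat_def)

lemma circuit_vec:
  assumes "\<forall>g\<in>set gs. wf_gate n g" and v: "v \<in> carrier_vec (2^n)"
  shows "circuit_mat n gs *\<^sub>v v = vec (2^n) (csem gs (($) v))"
  using assms(1)
proof (induction gs rule: rev_induct)
  case Nil
  then show ?case using v by (auto simp: circuit_mat_def)
next
  case (snoc g gs)
  have C: "circuit_mat n gs \<in> carrier_mat (2^n) (2^n)" by (rule circuit_carrier)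
  have "circuit_mat n (gs @ [g]) *\<^sub>v v = gate_mat n g *\<^sub>v (circuit_mat n gs *\<^sub>v v)"
    unfolding circuit_snoc by (rule assoc_mult_mat_vec[OF gate_carrier C v])
  also have "\<dots> = gate_mat n g *\<^sub>v vec (2^n) (csem gs (($) v))"
    using snoc by simp
  also have "\<dots> = vec (2^n) (gsem g (\<lambda>y. vec (2^n) (csem gs (($) v)) $ y))"
    using snoc by (intro gate_vec) auto
  also have "\<dots> = vec (2^n) (csem (gs @ [g]) (($) v))"
    using snoc by (intro eq_vecI) (auto intro!: gsem_local[of n g])
  finally show ?case .
qed



lemma qbit_less2: "qbit x j < 2" by (simp add: qbit_def)

fun adjg :: "gate \<Rightarrow> gate" where
  "adjg (SQ U i) = SQ (cadj U) i"
| "adjg (CNOT c t) = CNOT c t"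

lemma cadj_carrier: "A \<in> carrier_mat n m \<Longrightarrow> cadj A \<in> carrier_mat m n"
  by (simp add: cadj_def)

lemma cadj_index: "i < dim_col A \<Longrightarrow> j < dim_row A \<Longrightarrow> cadj A $$ (i,j) = cnj (A $$ (j,i))"
  by (simp add: cadj_def)

lemma cadj_one: "cadj (1\<^sub>m N) = 1\<^sub>m N"
  by (intro eq_matI) (auto simp: cadj_def)

lemma cadj_cadj: "cadj (cadj A) = A"
  by (intro eq_matI) (auto simp: cadj_def)

lemma cadj_mult:
  assumes A: "A \<in> carrier_mat n k" and B: "B \<in> carrier_mat k m"
  shows "cadj (A * B) = cadj B * cadj A"
proof (intro eq_matI)
  fix i j assume i: "i < dim_row (cadj B * cadj A)" and j: "j < dim_col (cadj B * cadj A)"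
  then have i': "i < m" and j': "j < n" using A B by (auto simp: cadj_def)
  have "cadj (A * B) $$ (i,j) = cnj (\<Sum>l<k. A $$ (j,l) * B $$ (l,i))"
    using A B i' j' by (simp add: cadj_def scalar_prod_def atLeast0LessThan)
  also have "\<dots> = (\<Sum>l<k. cnj (B $$ (l,i)) * cnj (A $$ (j,l)))"
    by (simp add: cnj_sum mult.commute)
  also have "\<dots> = (cadj B * cadj A) $$ (i,j)"
    using A B i' j' by (simp add: cadj_def scalar_prod_def atLeast0LessThan)
  finally show "cadj (A * B) $$ (i,j) = (cadj B * cadj A) $$ (i,j)" .
qed (use A B in \<open>auto simp: cadj_def\<close>)

lemma agree_sym: "agree n i x y = agree n i y x"
  by (auto simp: agree_def)

lemma cnot_entry: "x < 2^n \<Longrightarrow> y < 2^n \<Longrightarrow> gate_mat n (CNOT c t) $$ (x,y) = (if x = cperm c t y then 1 else 0)"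
  by (simp add: cperm_def)

lemma cadj_gate:
  assumes g: "wf_gate n g"
  shows "cadj (gate_mat n g) = gate_mat n (adjg g)"
proof (cases g)
  case (SQ U i)
  have U: "U \<in> carrier_mat 2 2" using g SQ by simp
  show ?thesis
  proof (intro eq_matI)
    fix x y assume x: "x < dim_row (gate_mat n (adjg g))" and y: "y < dim_col (gate_mat n (adjg g))"
    then have x': "x < 2^n" and y': "y < 2^n" by (auto simp: SQ)
    have q: "qbit x i < 2" "qbit y i < 2" by (rule qbit_less2)+
    show "cadj (gate_mat n g) $$ (x,y) = gate_mat n (adjg g) $$ (x,y)"
      using x' y' U q by (simp add: SQ cadj_def agree_def[symmetric] agree_sym[of n i x y])
  qed (auto simp: SQ cadj_def)
next
  case (CNOT c t)
  have ct: "c \<noteq> t" using g CNOT by simp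
  show ?thesis
  proof (intro eq_matI)
    fix x y assume x: "x < dim_row (gate_mat n (adjg g))" and y: "y < dim_col (gate_mat n (adjg g))"
    then have x': "x < 2^n" and y': "y < 2^n" by (auto simp: CNOT)
    have "cadj (gate_mat n g) $$ (x,y) = cnj (gate_mat n g $$ (y,x))"
      using x' y' by (simp add: CNOT cadj_def)
    also have "\<dots> = (if y = cperm c t x then 1 else 0)"
      unfolding CNOT cnot_entry[OF y' x'] by simp
    also have "\<dots> = (if x = cperm c t y then 1 else 0)"
      using cperm_eq[OF ct, of x y] by simp
    also have "\<dots> = gate_mat n (adjg g) $$ (x,y)"
      unfolding CNOT adjg.simps cnot_entry[OF x' y'] ..
    finally show "cadj (gate_mat n g) $$ (x,y) = gate_mat n (adjg g) $$ (x,y)" .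
  qed (auto simp: CNOT cadj_def)
qed

lemma mult2: "A \<in> carrier_mat 2 2 \<Longrightarrow> B \<in> carrier_mat 2 2 \<Longrightarrow> a < 2 \<Longrightarrow> b < 2 \<Longrightarrow>
  (A * B) $$ (a,b) = A $$ (a,0) * B $$ (0,b) + A $$ (a,1) * B $$ (1,b)"
  by (simp add: scalar_prod_def numeral_2_eq_2)

lemma one2: "a < 2 \<Longrightarrow> b < 2 \<Longrightarrow> (1\<^sub>m 2 :: complex mat) $$ (a,b) = (if a = b then 1 else 0)"
  by simp

lemma gsem_adj:
  assumes g: "wf_gate n g" and u: "\<And>U i. g = SQ U i \<Longrightarrow> cadj U * U = 1\<^sub>m 2"
  shows "gsem (adjg g) (gsem g f) x = f x"
proof (cases g)
  case (SQ U i)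
  have U: "U \<in> carrier_mat 2 2" using g SQ by simp
  have V: "cadj U \<in> carrier_mat 2 2" using cadj_carrier[OF U] .
  have VU: "cadj U * U = 1\<^sub>m 2" using u SQ by simp
  define a where "a = qbit x i"
  have a: "a < 2" unfolding a_def by (rule qbit_less2)
  have e0: "cadj U $$ (a,0) * U $$ (0,0) + cadj U $$ (a,1) * U $$ (1,0) = (if a = 0 then 1 else 0)"
    using mult2[OF V U a, of 0] VU a by simp
  have e1: "cadj U $$ (a,0) * U $$ (0,1) + cadj U $$ (a,1) * U $$ (1,1) = (if a = 1 then 1 else 0)"
    using mult2[OF V U a, of 1] VU a by simp
  have "gsem (adjg g) (gsem g f) x =
     (cadj U $$ (a,0) * U $$ (0,0) + cadj U $$ (a,1) * U $$ (1,0)) * f (setb x i 0) +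
     (cadj U $$ (a,0) * U $$ (0,1) + cadj U $$ (a,1) * U $$ (1,1)) * f (setb x i 1)"
    by (simp add: SQ a_def[symmetric] qbit_setb setb_setb algebra_simps)
  also have "\<dots> = f (setb x i a)"
    unfolding e0 e1 using a by (cases "a = 0") (auto simp: less_2_cases_iff)
  also have "\<dots> = f x" unfolding a_def setb_self ..
  finally show ?thesis .
next
  case (CNOT c t)
  then show ?thesis using g cperm_cperm by simp
qed

lemma mat_unit_col: "(A :: complex mat) \<in> carrier_mat N N \<Longrightarrow> x < N \<Longrightarrow> y < N \<Longrightarrow> (A *\<^sub>v unit_vec N y) $ x = A $$ (x,y)"
proof -
  assume A: "A \<in> carrier_mat N N" and x: "x < N" and y: "y < N"
  have "(A *\<^sub>v unit_vec N y) $ x = (\<Sum>z<N. A $$ (x,z) * unit_vec N y $ z)"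
    by (rule mat_vec_sum[OF A _ x]) simp
  also have "\<dots> = (\<Sum>z<N. if z = y then A $$ (x,z) else 0)"
    by (rule sum.cong) (auto simp: unit_vec_def)
  also have "\<dots> = A $$ (x,y)" using y by (simp add: sum.delta)
  finally show ?thesis .
qed

lemma mat_eq_one_cols:
  assumes A: "(A :: complex mat) \<in> carrier_mat N N" and c: "\<And>x y. x < N \<Longrightarrow> y < N \<Longrightarrow> (A *\<^sub>v unit_vec N y) $ x = (if x = y then 1 else 0)"
  shows "A = 1\<^sub>m N"
proof (intro eq_matI)
  fix i j assume "i < dim_row (1\<^sub>m N :: complex mat)" "j < dim_col (1\<^sub>m N :: complex mat)"
  then have i: "i < N" and j: "j < N" by auto
  show "A $$ (i,j) = 1\<^sub>m N $$ (i,j)"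
    using c[OF i j] mat_unit_col[OF A i j] i j by simp
qed (use A in auto)

lemma wf_adjg: "wf_gate n g \<Longrightarrow> wf_gate n (adjg g)"
  by (cases g) (auto simp: cadj_carrier)

lemma gate_inv:
  assumes g: "wf_gate n g" and u: "\<And>U i. g = SQ U i \<Longrightarrow> cadj U * U = 1\<^sub>m 2"
  shows "gate_mat n (adjg g) * gate_mat n g = 1\<^sub>m (2^n)"
proof (rule mat_eq_one_cols)
  show "gate_mat n (adjg g) * gate_mat n g \<in> carrier_mat (2^n) (2^n)"
    using gate_carrier by (rule mult_carrier_mat) (rule gate_carrier)
  fix x y :: nat assume x: "x < 2^n" and y: "y < 2^n"
  let ?e = "unit_vec (2^n) y :: complex vec"
  have "(gate_mat n (adjg g) * gate_mat n g) *\<^sub>v ?e = gate_mat n (adjg g) *\<^sub>v (gate_mat n g *\<^sub>v ?e)"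
    by (rule assoc_mult_mat_vec[OF gate_carrier gate_carrier]) simp
  also have "gate_mat n g *\<^sub>v ?e = vec (2^n) (gsem g (($) ?e))"
    by (rule gate_vec[OF g]) simp
  finally have "((gate_mat n (adjg g) * gate_mat n g) *\<^sub>v ?e) $ x = gsem (adjg g) (($) (vec (2^n) (gsem g (($) ?e)))) x"
    using gate_apply[OF wf_adjg[OF g] _ x] by simp
  also have "\<dots> = gsem (adjg g) (gsem g (($) ?e)) x"
    by (rule gsem_local[OF wf_adjg[OF g] x]) simp
  also have "\<dots> = ?e $ x" by (rule gsem_adj[OF g u])
  finally show "((gate_mat n (adjg g) * gate_mat n g) *\<^sub>v ?e) $ x = (if x = y then 1 else 0)"
    using x y by simp
qed

lemma valid_unitary_cond: "valid_gate n g \<Longrightarrow> g = SQ U i \<Longrightarrow> cadj U * U = 1\<^sub>m 2"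
  by (auto simp: unitary_mat_def)

lemma circuit_unitary:
  assumes "valid_circuit n gs"
  shows "unitary_mat (2^n) (circuit_mat n gs)"
  using assms
proof (induction gs rule: rev_induct)
  case Nil
  then show ?case by (simp add: unitary_mat_def circuit_mat_def cadj_one)
next
  case (snoc g gs)
  have vg: "valid_gate n g" and vgs: "valid_circuit n gs" using snoc.prems by (auto simp: valid_circuit_def)
  have C: "circuit_mat n gs \<in> carrier_mat (2^n) (2^n)" by (rule circuit_carrier)
  have G: "gate_mat n g \<in> carrier_mat (2^n) (2^n)" by (rule gate_carrier)
  have CC: "cadj (circuit_mat n gs) * circuit_mat n gs = 1\<^sub>m (2^n)"
    using snoc.IH[OF vgs] by (simp add: unitary_mat_def)
  have GG: "cadj (gate_mat n g) * gate_mat n g = 1\<^sub>m (2^n)"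
    using gate_inv[OF valid_wf[OF vg] valid_unitary_cond[OF vg]] cadj_gate[OF valid_wf[OF vg]] by simp
  have CA: "cadj (circuit_mat n gs) \<in> carrier_mat (2^n) (2^n)" by (rule cadj_carrier[OF C])
  have GA: "cadj (gate_mat n g) \<in> carrier_mat (2^n) (2^n)" by (rule cadj_carrier[OF G])
  have "cadj (gate_mat n g * circuit_mat n gs) * (gate_mat n g * circuit_mat n gs)
      = (cadj (circuit_mat n gs) * cadj (gate_mat n g)) * (gate_mat n g * circuit_mat n gs)"
    by (simp add: cadj_mult[OF G C])
  also have "\<dots> = cadj (circuit_mat n gs) * ((cadj (gate_mat n g) * gate_mat n g) * circuit_mat n gs)"
    using CA GA G C by (simp add: assoc_mult_mat[of _ "2^n" "2^n" _ "2^n" _ "2^n"])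
  also have "\<dots> = 1\<^sub>m (2^n)" using GG CC C by simp
  finally show ?case using G C by (simp add: unitary_mat_def circuit_snoc mult_carrier_mat)
qed

lemma foldl_circuit: "X \<in> carrier_mat (2^n) (2^n) \<Longrightarrow>
  foldl (\<lambda>A g. gate_mat n g * A) X hs = circuit_mat n hs * X"
proof (induction hs rule: rev_induct)
  case Nil
  then show ?case by (simp add: circuit_mat_def)
next
  case (snoc h hs)
  have "foldl (\<lambda>A g. gate_mat n g * A) X (hs @ [h]) = gate_mat n h * (circuit_mat n hs * X)"
    using snoc by simp
  also have "\<dots> = (gate_mat n h * circuit_mat n hs) * X"
    using snoc.prems gate_carrier circuit_carrier by (metis assoc_mult_mat)
  finally show ?case by (simp add: circuit_snoc)
qed

lemma circuit_Cons: "circuit_mat n (g # hs) = circuit_mat n hs * gate_mat n g"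
proof -
  have "circuit_mat n (g # hs) = foldl (\<lambda>A g. gate_mat n g * A) (gate_mat n g * 1\<^sub>m (2^n)) hs"
    by (simp add: circuit_mat_def)
  also have "gate_mat n g * 1\<^sub>m (2^n) = gate_mat n g" by (rule right_mult_one_mat[OF gate_carrier])
  finally show ?thesis using foldl_circuit[OF gate_carrier] by simp
qed

lemma circuit_adj:
  assumes "\<forall>g\<in>set gs. wf_gate n g"
  shows "cadj (circuit_mat n gs) = circuit_mat n (rev (map adjg gs))"
  using assms
proof (induction gs rule: rev_induct)
  case Nil
  then show ?case by (intro eq_matI) (auto simp: circuit_mat_def cadj_def)
next
  case (snoc g gs)
  have "cadj (circuit_mat n (gs @ [g])) = cadj (circuit_mat n gs) * cadj (gate_mat n g)"
    unfolding circuit_snoc by (rule cadj_mult[OF gate_carrier circuit_carrier])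
  also have "\<dots> = circuit_mat n (rev (map adjg gs)) * gate_mat n (adjg g)"
    using snoc by (simp add: cadj_gate)
  also have "\<dots> = circuit_mat n (rev (map adjg (gs @ [g])))"
    by (simp add: circuit_Cons)
  finally show ?case .
qed

lemma valid_adjg: "valid_gate n g \<Longrightarrow> valid_gate n (adjg g)"
proof (cases g)
  case (SQ U i)
  assume v: "valid_gate n g"
  then have U: "U \<in> carrier_mat 2 2" and UU: "cadj U * U = 1\<^sub>m 2" and i: "i < n"
    using SQ by (auto simp: unitary_mat_def)
  have "U * cadj U = 1\<^sub>m 2" by (rule mat_mult_left_right_inverse[OF cadj_carrier[OF U] U UU])
  then show ?thesis using SQ i cadj_carrier[OF U] by (simp add: unitary_mat_def cadj_cadj)
qed auto



definition liftf :: "nat \<Rightarrow> nat \<Rightarrow> (nat \<Rightarrow> complex) \<Rightarrow> nat \<Rightarrow> complex" where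
  "liftf m a w y = (if y div 2^m = a then w (y mod 2^m) else 0)"

lemma qbit_mod: "qbit (x mod 2^m) j = (if j < m then qbit x j else 0)"
proof -
  have "x mod 2^m = take_bit m x" by (simp add: take_bit_eq_mod)
  then show ?thesis by (simp add: qbit_bit bit_take_bit_iff)
qed

lemma qbit_div: "qbit (x div 2^m) j = qbit x (m + j)"
proof -
  have "x div 2^m = drop_bit m x" by (simp add: drop_bit_eq_div)
  then show ?thesis by (simp add: qbit_bit bit_drop_bit_eq)
qed

lemma setb_div: "i < m \<Longrightarrow> b \<le> 1 \<Longrightarrow> setb x i b div 2^m = x div 2^m"
  by (rule nat_bits_eq) (simp add: qbit_div qbit_setb)

lemma setb_mod: "i < m \<Longrightarrow> b \<le> 1 \<Longrightarrow> setb x i b mod 2^m = setb (x mod 2^m) i b"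
  by (rule nat_bits_eq) (simp add: qbit_mod qbit_setb)

lemma cperm_div: "t < m \<Longrightarrow> cperm c t x div 2^m = x div 2^m"
  by (simp add: cperm_def flip_bit_setb setb_div)

lemma cperm_mod: "c < m \<Longrightarrow> t < m \<Longrightarrow> cperm c t x mod 2^m = cperm c t (x mod 2^m)"
  by (simp add: cperm_def flip_bit_setb setb_mod qbit_mod)

lemma gsem_lift:
  assumes g: "wf_gate m g"
  shows "gsem g (liftf m a w) x = liftf m a (gsem g w) x"
proof (cases g)
  case (SQ U i)
  have i: "i < m" using g SQ by simp
  show ?thesis using i by (simp add: SQ liftf_def setb_div setb_mod qbit_mod)
next
  case (CNOT c t)
  have ct: "c < m" "t < m" using g CNOT by auto
  show ?thesis using ct by (simp add: CNOT liftf_def cperm_div cperm_mod)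
qed

lemma csem_lift:
  "\<forall>g\<in>set gs. wf_gate m g \<Longrightarrow> csem gs (liftf m a w) = liftf m a (csem gs w)"
proof (induction gs arbitrary: w)
  case Nil
  then show ?case by simp
next
  case (Cons g gs)
  have "gsem g (liftf m a w) = liftf m a (gsem g w)"
    using Cons.prems gsem_lift by auto
  then show ?case using Cons by simp
qed

lemma csem_local:
  assumes "\<forall>g\<in>set gs. wf_gate n g"
  shows "x < 2^n \<Longrightarrow> (\<And>y. y < 2^n \<Longrightarrow> f y = f' y) \<Longrightarrow> csem gs f x = csem gs f' x"
  using assms
proof (induction gs arbitrary: x rule: rev_induct)
  case Nil
  then show ?case by simp
next
  case (snoc g gs)
  have wg: "wf_gate n g" and wgs: "\<forall>g\<in>set gs. wf_gate n g" using snoc.prems(3) by auto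
  have "csem (gs @ [g]) f x = gsem g (csem gs f) x" by simp
  also have "\<dots> = gsem g (csem gs f') x"
  proof (rule gsem_local[OF wg snoc.prems(1)])
    fix y :: nat assume "y < 2^n"
    then show "csem gs f y = csem gs f' y" by (rule snoc.IH[OF _ snoc.prems(2) wgs])
  qed
  finally show ?case by simp
qed

lemma valid_mono: "valid_gate m g \<Longrightarrow> valid_gate (m + k) g"
  by (cases g) auto

lemma idx_split: "(s::nat) < 2^m \<Longrightarrow> (y = s + 2^m * a) = (y div 2^m = a \<and> y mod 2^m = s)"
proof
  assume s: "s < 2^m" and "y = s + 2^m * a"
  then show "y div 2^m = a \<and> y mod 2^m = s" by simp
next
  assume "y div 2^m = a \<and> y mod 2^m = s"
  then show "y = s + 2^m * a" using mod_mult_div_eq[of y "2^m"] by simp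
qed

lemma circuit_entry:
  assumes wf: "\<forall>g\<in>set gs. wf_gate m g" and i: "i < 2^m" and s: "s < 2^m"
  shows "circuit_mat m gs $$ (i, s) = csem gs (\<lambda>y. if y = s then 1 else 0) i"
proof -
  have "circuit_mat m gs $$ (i, s) = (circuit_mat m gs *\<^sub>v unit_vec (2^m) s) $ i"
    using mat_unit_col[OF circuit_carrier i s] by simp
  also have "\<dots> = csem gs (($) (unit_vec (2^m) s)) i"
    using circuit_vec[OF wf, of "unit_vec (2^m) s"] i by simp
  also have "\<dots> = csem gs (\<lambda>y. if y = s then 1 else 0) i"
    by (rule csem_local[OF wf i]) (simp add: unit_vec_def)
  finally show ?thesis .
qed

lemma exec_general:
  assumes v: "valid_circuit m gs" and s: "s < 2^m" and a: "a < 2^k"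
  shows "circuit_mat (m + k) gs *\<^sub>v unit_vec (2 ^ (m + k)) (s + 2 ^ m * a)
        = vec (2 ^ (m + k)) (\<lambda>x. if x div 2 ^ m = a then circuit_mat m gs $$ (x mod 2 ^ m, s) else 0)"
proof -
  have wfm: "\<forall>g\<in>set gs. wf_gate m g" using v valid_wf by (auto simp: valid_circuit_def)
  have wfk: "\<forall>g\<in>set gs. wf_gate (m + k) g" using v valid_wf valid_mono by (auto simp: valid_circuit_def)
  let ?e = "unit_vec (2 ^ (m + k)) (s + 2 ^ m * a) :: complex vec"
  have "circuit_mat (m + k) gs *\<^sub>v ?e = vec (2 ^ (m + k)) (csem gs (($) ?e))"
    by (rule circuit_vec[OF wfk]) simp
  also have "\<dots> = vec (2 ^ (m + k)) (\<lambda>x. if x div 2 ^ m = a then circuit_mat m gs $$ (x mod 2 ^ m, s) else 0)"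
  proof (intro eq_vecI)
    fix x assume "x < dim_vec (vec (2 ^ (m + k)) (\<lambda>x. if x div 2 ^ m = a then circuit_mat m gs $$ (x mod 2 ^ m, s) else 0))"
    then have x: "x < 2^(m+k)" by simp
    have "csem gs (($) ?e) x = csem gs (liftf m a (\<lambda>y. if y = s then 1 else 0)) x"
      by (rule csem_local[OF wfk x]) (auto simp: unit_vec_def liftf_def idx_split[OF s])
    also have "\<dots> = (if x div 2 ^ m = a then circuit_mat m gs $$ (x mod 2 ^ m, s) else 0)"
      using circuit_entry[OF wfm _ s] by (simp add: csem_lift[OF wfm] liftf_def)
    finally show "vec (2 ^ (m + k)) (csem gs (($) ?e)) $ x = vec (2 ^ (m + k)) (\<lambda>x. if x div 2 ^ m = a then circuit_mat m gs $$ (x mod 2 ^ m, s) else 0) $ x"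
      using x by simp
  qed simp
  finally show ?thesis .
qed

lemma exec_borrowed: "valid_circuit m gs \<Longrightarrow> executes_borrowed m k gs (circuit_mat m gs)"
  unfolding executes_borrowed_def using exec_general valid_mono
  by (auto simp: valid_circuit_def)

lemma exec_ancilla: "valid_circuit m gs \<Longrightarrow> executes_ancilla m k gs (circuit_mat m gs)"
  unfolding executes_ancilla_def using exec_general[of m gs _ 0 k] valid_mono
  by (auto simp: valid_circuit_def)



definition rotf :: "real \<Rightarrow> nat \<Rightarrow> nat \<Rightarrow> real" where
  "rotf \<theta> a b = (if a = 0 then (if b = 0 then cos \<theta> else - sin \<theta>) else (if b = 0 then sin \<theta> else cos \<theta>))"

definition rotm :: "real \<Rightarrow> complex mat" where
  "rotm \<theta> = mat 2 2 (\<lambda>(a,b). complex_of_real (rotf \<theta> a b))"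

lemma rotm_carrier: "rotm \<theta> \<in> carrier_mat 2 2" by (simp add: rotm_def)

lemma rotm_idx: "a < 2 \<Longrightarrow> b < 2 \<Longrightarrow> rotm \<theta> $$ (a,b) = complex_of_real (rotf \<theta> a b)"
  by (simp add: rotm_def)

lemma cadj_rotm: "a < 2 \<Longrightarrow> b < 2 \<Longrightarrow> cadj (rotm \<theta>) $$ (a,b) = complex_of_real (rotf \<theta> b a)"
  by (simp add: cadj_def rotm_def)

lemma less2: "(a::nat) < 2 \<Longrightarrow> a = 0 \<or> a = 1" by auto

lemma rotm_unitary: "unitary_mat 2 (rotm \<theta>)"
  unfolding unitary_mat_def
proof
  show "rotm \<theta> \<in> carrier_mat 2 2" by (rule rotm_carrier)
  show "cadj (rotm \<theta>) * rotm \<theta> = 1\<^sub>m 2"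
  proof (intro eq_matI)
    fix a b assume "a < dim_row (1\<^sub>m 2 :: complex mat)" "b < dim_col (1\<^sub>m 2 :: complex mat)"
    then have a: "a < 2" and b: "b < 2" by auto
    have "(cadj (rotm \<theta>) * rotm \<theta>) $$ (a,b) =
      complex_of_real (rotf \<theta> 0 a * rotf \<theta> 0 b + rotf \<theta> 1 a * rotf \<theta> 1 b)"
      using mult2[OF cadj_carrier[OF rotm_carrier] rotm_carrier a b] a b
      by (simp add: cadj_rotm rotm_idx)
    also have "rotf \<theta> 0 a * rotf \<theta> 0 b + rotf \<theta> 1 a * rotf \<theta> 1 b = (if a = b then 1 else 0)"
      using less2[OF a] less2[OF b] by (auto simp: rotf_def sin_cos_squared_add3 sin_cos_squared_add[unfolded power2_eq_square])
    also have "complex_of_real (if a = b then 1 else 0) = 1\<^sub>m 2 $$ (a,b)"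
      using a b by simp
    finally show "(cadj (rotm \<theta>) * rotm \<theta>) $$ (a,b) = 1\<^sub>m 2 $$ (a,b)" .
  qed (auto simp: cadj_def rotm_def)
qed

lemma rot_comp0: "a < 2 \<Longrightarrow> c < 2 \<Longrightarrow>
  rotf \<beta> a 0 * rotf \<alpha> 0 c + rotf \<beta> a 1 * rotf \<alpha> 1 c = rotf (\<alpha> + \<beta>) a c"
  using less2[of a] less2[of c] by (auto simp: rotf_def cos_add sin_add algebra_simps)

lemma rot_comp1: "a < 2 \<Longrightarrow> c < 2 \<Longrightarrow>
  rotf \<beta> (1 - a) 0 * rotf \<alpha> 1 c + rotf \<beta> (1 - a) 1 * rotf \<alpha> 0 c = rotf (\<alpha> - \<beta>) a c"
  using less2[of a] less2[of c] by (auto simp: rotf_def cos_diff sin_diff algebra_simps)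

fun ucr :: "nat \<Rightarrow> nat list \<Rightarrow> (nat \<Rightarrow> real) \<Rightarrow> gate list" where
  "ucr t [] \<Theta> = [SQ (rotm (\<Theta> 0)) t]"
| "ucr t (q # qs) \<Theta> =
     ucr t qs (\<lambda>x. (\<Theta> (setb x q 0) + \<Theta> (setb x q 1)) / 2) @ [CNOT q t] @
     ucr t qs (\<lambda>x. (\<Theta> (setb x q 0) - \<Theta> (setb x q 1)) / 2) @ [CNOT q t]"

definition ucr_sem :: "nat \<Rightarrow> (nat \<Rightarrow> real) \<Rightarrow> (nat \<Rightarrow> complex) \<Rightarrow> nat \<Rightarrow> complex" where
  "ucr_sem t \<Theta> f x = complex_of_real (rotf (\<Theta> x) (qbit x t) 0) * f (setb x t 0)
                    + complex_of_real (rotf (\<Theta> x) (qbit x t) 1) * f (setb x t 1)"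

definition dep :: "nat \<Rightarrow> nat list \<Rightarrow> (nat \<Rightarrow> real) \<Rightarrow> bool" where
  "dep n qs \<Theta> = (\<forall>x<2^n. \<forall>y<2^n. (\<forall>j\<in>set qs. qbit x j = qbit y j) \<longrightarrow> \<Theta> x = \<Theta> y)"

lemma ucr_length: "length (ucr t qs \<Theta>) + 2 = 3 * 2 ^ length qs"
  by (induction qs arbitrary: \<Theta>) auto

lemma ucr_valid: "t < n \<Longrightarrow> \<forall>q\<in>set qs. q < n \<and> q \<noteq> t \<Longrightarrow> valid_circuit n (ucr t qs \<Theta>)"
  by (induction qs arbitrary: \<Theta>) (auto simp: valid_circuit_def rotm_unitary)

lemma dep_step:
  assumes d: "dep n (q # qs) \<Theta>" and q: "q < n"
  shows "dep n qs (\<lambda>x. (\<Theta> (setb x q 0) + \<Theta> (setb x q 1)) / 2)"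
    and "dep n qs (\<lambda>x. (\<Theta> (setb x q 0) - \<Theta> (setb x q 1)) / 2)"
proof -
  have key: "\<Theta> (setb x q b) = \<Theta> (setb y q b)"
    if x: "x < 2^n" and y: "y < 2^n" and ag: "\<forall>j\<in>set qs. qbit x j = qbit y j" and b: "b \<le> 1" for x y b
  proof -
    have "\<forall>j\<in>set (q # qs). qbit (setb x q b) j = qbit (setb y q b) j"
      using ag b by (simp add: qbit_setb)
    then show ?thesis using d setb_less[OF x q] setb_less[OF y q] unfolding dep_def by blast
  qed
  show "dep n qs (\<lambda>x. (\<Theta> (setb x q 0) + \<Theta> (setb x q 1)) / 2)"
    unfolding dep_def
  proof (intro allI impI)
    fix x y :: nat assume "x < 2^n" "y < 2^n" "\<forall>j\<in>set qs. qbit x j = qbit y j"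
    then show "(\<Theta> (setb x q 0) + \<Theta> (setb x q 1)) / 2 = (\<Theta> (setb y q 0) + \<Theta> (setb y q 1)) / 2"
      using key[of x y 0] key[of x y 1] by simp
  qed
  show "dep n qs (\<lambda>x. (\<Theta> (setb x q 0) - \<Theta> (setb x q 1)) / 2)"
    unfolding dep_def
  proof (intro allI impI)
    fix x y :: nat assume "x < 2^n" "y < 2^n" "\<forall>j\<in>set qs. qbit x j = qbit y j"
    then show "(\<Theta> (setb x q 0) - \<Theta> (setb x q 1)) / 2 = (\<Theta> (setb y q 0) - \<Theta> (setb y q 1)) / 2"
      using key[of x y 0] key[of x y 1] by simp
  qed
qed



abbreviation R :: "real \<Rightarrow> nat \<Rightarrow> nat \<Rightarrow> complex" where
  "R \<theta> a b \<equiv> complex_of_real (rotf \<theta> a b)"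

lemma combine0: "a < 2 \<Longrightarrow>
  R \<beta> a 0 * (R \<alpha> 0 0 * u + R \<alpha> 0 1 * v) + R \<beta> a 1 * (R \<alpha> 1 0 * u + R \<alpha> 1 1 * v)
  = R (\<alpha> + \<beta>) a 0 * u + R (\<alpha> + \<beta>) a 1 * v"
  by (simp add: rot_comp0[symmetric] algebra_simps)

lemma combine1: "a < 2 \<Longrightarrow>
  R \<beta> (1 - a) 0 * (R \<alpha> 1 0 * u + R \<alpha> 1 1 * v) + R \<beta> (1 - a) 1 * (R \<alpha> 0 0 * u + R \<alpha> 0 1 * v)
  = R (\<alpha> - \<beta>) a 0 * u + R (\<alpha> - \<beta>) a 1 * v"
  by (simp add: rot_comp1[symmetric] algebra_simps)

lemma dep_setb_t:
  assumes "dep n qs \<Theta>" "t \<notin> set qs" "x < 2^n" "t < n" "b \<le> 1"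
  shows "\<Theta> (setb x t b) = \<Theta> x"
proof -
  have "\<forall>j\<in>set qs. qbit (setb x t b) j = qbit x j" using assms by (auto simp: qbit_setb)
  then show ?thesis using assms setb_less[OF assms(3) assms(4)] unfolding dep_def by blast
qed

lemma gsem_cnot_fun: "gsem (CNOT q t) h = (\<lambda>y. h (cperm q t y))"
  by (rule ext) simp

lemma ucr_correct:
  assumes "t < n" "\<forall>q\<in>set qs. q < n \<and> q \<noteq> t" "dep n qs \<Theta>" "x < 2^n"
  shows "csem (ucr t qs \<Theta>) f x = ucr_sem t \<Theta> f x"
  using assms
proof (induction qs arbitrary: \<Theta> f x)
  case Nil
  have d: "\<forall>x<2^n. \<forall>y<2^n. (\<forall>j\<in>set []. qbit x j = qbit y j) \<longrightarrow> \<Theta> x = \<Theta> y"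
    using Nil.prems(3) by (simp only: dep_def)
  have z: "(0::nat) < 2^n" by simp
  have hx: "\<Theta> x = \<Theta> 0" using d[rule_format, OF Nil.prems(4) z] by simp
  have "csem (ucr t [] \<Theta>) f x = rotm (\<Theta> 0) $$ (qbit x t, 0) * f (setb x t 0) + rotm (\<Theta> 0) $$ (qbit x t, 1) * f (setb x t 1)"
    by simp
  also have "\<dots> = R (\<Theta> 0) (qbit x t) 0 * f (setb x t 0) + R (\<Theta> 0) (qbit x t) 1 * f (setb x t 1)"
    by (simp add: rotm_idx[OF qbit_less2])
  also have "\<dots> = ucr_sem t \<Theta> f x" unfolding ucr_sem_def hx ..
  finally show ?case .
next
  case (Cons q qs)
  have t: "t < n" and q: "q < n" "q \<noteq> t" and qs: "\<forall>q\<in>set qs. q < n \<and> q \<noteq> t"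
    and x: "x < 2^n" using Cons.prems by auto
  have tq: "t \<notin> set qs" using qs by auto
  define \<alpha> where "\<alpha> = (\<lambda>x. (\<Theta> (setb x q 0) + \<Theta> (setb x q 1)) / 2)"
  define \<beta> where "\<beta> = (\<lambda>x. (\<Theta> (setb x q 0) - \<Theta> (setb x q 1)) / 2)"
  have d\<alpha>: "dep n qs \<alpha>" unfolding \<alpha>_def by (rule dep_step(1)[OF Cons.prems(3) q(1)])
  have d\<beta>: "dep n qs \<beta>" unfolding \<beta>_def by (rule dep_step(2)[OF Cons.prems(3) q(1)])
  have IH\<alpha>: "\<And>f y. y < 2^n \<Longrightarrow> csem (ucr t qs \<alpha>) f y = ucr_sem t \<alpha> f y"
    using Cons.IH[OF t qs d\<alpha>] .
  have IH\<beta>: "\<And>f y. y < 2^n \<Longrightarrow> csem (ucr t qs \<beta>) f y = ucr_sem t \<beta> f y"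
    using Cons.IH[OF t qs d\<beta>] .
  let ?\<pi> = "cperm q t"
  define g where "g = (\<lambda>y. csem (ucr t qs \<alpha>) f (?\<pi> y))"
  have px: "?\<pi> x < 2^n" by (rule cperm_less[OF x t])
  have "csem (ucr t (q # qs) \<Theta>) f x = csem (ucr t qs \<beta>) g (?\<pi> x)"
    by (simp add: \<alpha>_def \<beta>_def g_def gsem_cnot_fun)
  also have "\<dots> = ucr_sem t \<beta> g (?\<pi> x)" by (rule IH\<beta>[OF px])
  also have "\<dots> = ucr_sem t \<Theta> f x"
  proof (cases "qbit x q = 1")
    case False
    then have q0: "qbit x q = 0" using qbit_cases by blast
    have pxe: "?\<pi> x = x" using False by (simp add: cperm_def)
    have pb: "?\<pi> (setb x t b) = setb x t b" if "b \<le> 1" for b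
      using that q0 q(2) by (simp add: cperm_def qbit_setb)
    have gb: "g (setb x t b) = R (\<alpha> x) b 0 * f (setb x t 0) + R (\<alpha> x) b 1 * f (setb x t 1)" if b: "b \<le> 1" for b
    proof -
      have "g (setb x t b) = ucr_sem t \<alpha> f (setb x t b)"
        unfolding g_def pb[OF b] by (rule IH\<alpha>[OF setb_less[OF x t]])
      then show ?thesis using b dep_setb_t[OF d\<alpha> tq x t b]
        by (simp add: ucr_sem_def qbit_setb setb_setb)
    qed
    have ab: "\<alpha> x + \<beta> x = \<Theta> x"
      using q0 setb_self[of x q] by (simp add: \<alpha>_def \<beta>_def field_simps)
    have a2: "qbit x t < 2" by (rule qbit_less2)
    show ?thesis
      unfolding pxe ucr_sem_def[of t \<beta>] gb[OF le0] gb[OF order_refl]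
      using combine0[OF a2, of "\<beta> x" "\<alpha> x" "f (setb x t 0)" "f (setb x t 1)"] ab
      by (simp add: ucr_sem_def)
  next
    case True
    define a where "a = qbit x t"
    have a2: "a < 2" unfolding a_def by (rule qbit_less2)
    have a1: "1 - a \<le> 1" by simp
    have pxe: "?\<pi> x = setb x t (1 - a)" using True by (simp add: cperm_def flip_bit_setb a_def)
    have qpx: "qbit (?\<pi> x) t = 1 - a" unfolding pxe by (simp add: qbit_setb)
    have spx: "setb (?\<pi> x) t b = setb x t b" if "b \<le> 1" for b
      unfolding pxe using that by (rule setb_setb)
    have pb: "?\<pi> (setb x t b) = setb x t (1 - b)" if "b \<le> 1" for b
      using that True q(2) by (simp add: cperm_def qbit_setb flip_bit_setb setb_setb)
    have bpx: "\<beta> (?\<pi> x) = \<beta> x" unfolding pxe by (rule dep_setb_t[OF d\<beta> tq x t a1])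
    have gb: "g (setb x t b) = R (\<alpha> x) (1 - b) 0 * f (setb x t 0) + R (\<alpha> x) (1 - b) 1 * f (setb x t 1)" if b: "b \<le> 1" for b
    proof -
      have b1: "1 - b \<le> 1" by simp
      have "g (setb x t b) = ucr_sem t \<alpha> f (setb x t (1 - b))"
        unfolding g_def pb[OF b] by (rule IH\<alpha>[OF setb_less[OF x t]])
      then show ?thesis using b1 dep_setb_t[OF d\<alpha> tq x t b1]
        by (simp add: ucr_sem_def qbit_setb setb_setb)
    qed
    have ab: "\<alpha> x - \<beta> x = \<Theta> x"
      using True setb_self[of x q] by (simp add: \<alpha>_def \<beta>_def field_simps)
    have "ucr_sem t \<beta> g (?\<pi> x) = R (\<beta> x) (1 - a) 0 * g (setb x t 0) + R (\<beta> x) (1 - a) 1 * g (setb x t 1)"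
      unfolding ucr_sem_def qpx bpx spx[OF le0] spx[OF order_refl] ..
    also have "\<dots> = R (\<alpha> x - \<beta> x) a 0 * f (setb x t 0) + R (\<alpha> x - \<beta> x) a 1 * f (setb x t 1)"
      unfolding gb[OF le0] gb[OF order_refl] using combine1[OF a2] by simp
    also have "\<dots> = ucr_sem t \<Theta> f x" unfolding ab ucr_sem_def a_def ..
    finally show ?thesis .
  qed
  finally show ?case .
qed



lemma sum_split_add: "(\<Sum>j<a + b. (f j :: real)) = (\<Sum>j<a. f j) + (\<Sum>j<b. f (a + j :: nat))"
  by (induction b) (simp_all add: add.assoc)

definition Ssq :: "(nat \<Rightarrow> real) \<Rightarrow> nat \<Rightarrow> nat \<Rightarrow> real" where
  "Ssq \<psi> t y = (\<Sum>j<2^t. (\<psi> (y * 2^t + j))\<^sup>2)"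

definition W :: "(nat \<Rightarrow> real) \<Rightarrow> nat \<Rightarrow> nat \<Rightarrow> real" where
  "W \<psi> t y = (if t = 0 then \<psi> y else sqrt (Ssq \<psi> t y))"

lemma Ssq_nonneg: "Ssq \<psi> t y \<ge> 0"
  unfolding Ssq_def by (rule sum_nonneg) simp

lemma Ssq_split: "Ssq \<psi> (Suc t) c = Ssq \<psi> t (2 * c) + Ssq \<psi> t (2 * c + 1)"
proof -
  have "Ssq \<psi> (Suc t) c = (\<Sum>j<2^t + 2^t. (\<psi> (c * 2^(Suc t) + j))\<^sup>2)"
    by (simp add: Ssq_def mult_2)
  also have "\<dots> = (\<Sum>j<2^t. (\<psi> (c * 2^(Suc t) + j))\<^sup>2) + (\<Sum>j<2^t. (\<psi> (c * 2^(Suc t) + (2^t + j)))\<^sup>2)"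
    by (rule sum_split_add)
  also have "\<dots> = Ssq \<psi> t (2 * c) + Ssq \<psi> t (2 * c + 1)"
    by (simp add: Ssq_def algebra_simps)
  finally show ?thesis .
qed

lemma W_sq: "(W \<psi> t y)\<^sup>2 = Ssq \<psi> t y"
  by (simp add: W_def Ssq_def Ssq_nonneg[unfolded Ssq_def])

lemma W_succ: "W \<psi> (Suc t) c = sqrt ((W \<psi> t (2 * c))\<^sup>2 + (W \<psi> t (2 * c + 1))\<^sup>2)"
  by (simp add: W_def[of _ "Suc t"] W_sq Ssq_split)

definition ang :: "real \<Rightarrow> real \<Rightarrow> real" where
  "ang a b = (SOME \<theta>. sqrt (a\<^sup>2 + b\<^sup>2) * cos \<theta> = a \<and> sqrt (a\<^sup>2 + b\<^sup>2) * sin \<theta> = b)"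

lemma ang_prop: "sqrt (a\<^sup>2 + b\<^sup>2) * cos (ang a b) = a \<and> sqrt (a\<^sup>2 + b\<^sup>2) * sin (ang a b) = b"
proof -
  have "\<exists>\<theta>. sqrt (a\<^sup>2 + b\<^sup>2) * cos \<theta> = a \<and> sqrt (a\<^sup>2 + b\<^sup>2) * sin \<theta> = b"
  proof (cases "a\<^sup>2 + b\<^sup>2 = 0")
    case True
    then have "a = 0" "b = 0" by (auto simp: add_nonneg_eq_0_iff)
    then show ?thesis by simp
  next
    case False
    define r where "r = sqrt (a\<^sup>2 + b\<^sup>2)"
    have r0: "r > 0" using False unfolding r_def
      by (metis add_nonneg_nonneg real_sqrt_gt_0_iff zero_le_power2 order_le_less)
    have "(a / r)\<^sup>2 + (b / r)\<^sup>2 = 1"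
      using r0 False by (simp add: r_def power_divide add_divide_distrib[symmetric])
    then obtain \<theta> where "a / r = cos \<theta>" "b / r = sin \<theta>"
      by (rule sincos_total_2pi) auto
    then have "r * cos \<theta> = a" "r * sin \<theta> = b" using r0 by (auto simp: field_simps)
    then show ?thesis unfolding r_def by blast
  qed
  then show ?thesis unfolding ang_def by (rule someI_ex)
qed

lemma mod_zero_bits: "((x::nat) mod 2^L = 0) = (\<forall>j<L. qbit x j = 0)"
proof
  assume "x mod 2^L = 0"
  then show "\<forall>j<L. qbit x j = 0" using qbit_mod[of x L] by (metis qbit_def div_0 mod_0)
next
  assume a: "\<forall>j<L. qbit x j = 0"
  show "x mod 2^L = 0"
  proof (rule nat_bits_eq)
    fix j
    have "qbit (0::nat) j = 0" by (simp add: qbit_def)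
    then show "qbit (x mod 2^L) j = qbit 0 j" using a by (simp add: qbit_mod)
  qed
qed

lemma div_split: "(x::nat) div 2^t = 2 * (x div 2^(Suc t)) + qbit x t"
proof -
  have "x div 2^(Suc t) = x div 2^t div 2" by (simp only: power_Suc2 div_mult2_eq)
  moreover have "x div 2^t = 2 * (x div 2^t div 2) + x div 2^t mod 2" by simp
  ultimately show ?thesis by (simp add: qbit_def)
qed

definition Th :: "(nat \<Rightarrow> real) \<Rightarrow> nat \<Rightarrow> nat \<Rightarrow> real" where
  "Th \<psi> t x = ang (W \<psi> t (2 * (x div 2^(Suc t)))) (W \<psi> t (2 * (x div 2^(Suc t)) + 1))"

definition stage :: "(nat \<Rightarrow> real) \<Rightarrow> nat \<Rightarrow> nat \<Rightarrow> gate list" where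
  "stage \<psi> m t = ucr t [Suc t..<m] (Th \<psi> t)"

definition phi :: "(nat \<Rightarrow> real) \<Rightarrow> nat \<Rightarrow> nat \<Rightarrow> complex" where
  "phi \<psi> L x = complex_of_real (if x mod 2^L = 0 then W \<psi> L (x div 2^L) else 0)"

lemma dep_Th: assumes t: "t < m" shows "dep m [Suc t..<m] (Th \<psi> t)"
  unfolding dep_def
proof (intro allI impI)
  fix x y :: nat
  assume x: "x < 2^m" and y: "y < 2^m" and ag: "\<forall>j\<in>set [Suc t..<m]. qbit x j = qbit y j"
  have "x div 2^(Suc t) = y div 2^(Suc t)"
  proof (rule nat_bits_eq)
    fix j
    show "qbit (x div 2^(Suc t)) j = qbit (y div 2^(Suc t)) j"
    proof (cases "Suc t + j < m")
      case True
      then show ?thesis unfolding qbit_div using ag by simp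
    next
      case False
      then show ?thesis unfolding qbit_div using qbit_big[OF x, of "Suc t + j"] qbit_big[OF y, of "Suc t + j"]
        by simp
    qed
  qed
  then show "Th \<psi> t x = Th \<psi> t y" by (simp add: Th_def)
qed

lemma stage_valid: "t < m \<Longrightarrow> valid_circuit m (stage \<psi> m t)"
  unfolding stage_def by (rule ucr_valid) auto

lemma stage_length: "length (stage \<psi> m t) + 2 = 3 * 2 ^ (m - Suc t)"
  unfolding stage_def using ucr_length[of t "[Suc t..<m]" "Th \<psi> t"] by simp

lemma stage_correct:
  assumes t: "t < m" and x: "x < 2^m"
  shows "csem (stage \<psi> m t) (phi \<psi> (Suc t)) x = phi \<psi> t x"
proof -
  define c where "c = x div 2^(Suc t)"
  define a where "a = qbit x t"
  have a2: "a < 2" unfolding a_def by (rule qbit_less2)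
  have "csem (stage \<psi> m t) (phi \<psi> (Suc t)) x = ucr_sem t (Th \<psi> t) (phi \<psi> (Suc t)) x"
    unfolding stage_def by (rule ucr_correct[OF t _ dep_Th[OF t] x]) auto
  also have p1: "phi \<psi> (Suc t) (setb x t 1) = 0"
  proof -
    have "\<not> (setb x t 1 mod 2^(Suc t) = 0)"
      unfolding mod_zero_bits by (auto simp: qbit_setb)
    then show ?thesis by (simp add: phi_def)
  qed
  have m0: "(setb x t 0 mod 2^(Suc t) = 0) = (x mod 2^t = 0)"
    unfolding mod_zero_bits by (auto simp: qbit_setb less_Suc_eq)
  have d0: "setb x t 0 div 2^(Suc t) = c" unfolding c_def by (rule setb_div) auto
  have p0: "phi \<psi> (Suc t) (setb x t 0) = complex_of_real (if x mod 2^t = 0 then W \<psi> (Suc t) c else 0)"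
    unfolding phi_def m0 d0 by (rule refl)
  have "ucr_sem t (Th \<psi> t) (phi \<psi> (Suc t)) x =
      complex_of_real (rotf (Th \<psi> t x) a 0 * (if x mod 2^t = 0 then W \<psi> (Suc t) c else 0))"
    unfolding ucr_sem_def p0 p1 a_def by simp
  also have "\<dots> = phi \<psi> t x"
  proof (cases "x mod 2^t = 0")
    case False
    then show ?thesis by (simp add: phi_def)
  next
    case True
    have xd: "x div 2^t = 2 * c + a" unfolding c_def a_def by (rule div_split)
    have th: "Th \<psi> t x = ang (W \<psi> t (2 * c)) (W \<psi> t (2 * c + 1))" by (simp add: Th_def c_def)
    have ws: "W \<psi> (Suc t) c = sqrt ((W \<psi> t (2 * c))\<^sup>2 + (W \<psi> t (2 * c + 1))\<^sup>2)" by (rule W_succ)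
    have "rotf (Th \<psi> t x) a 0 * W \<psi> (Suc t) c = W \<psi> t (2 * c + a)"
      using ang_prop[of "W \<psi> t (2 * c)" "W \<psi> t (2 * c + 1)"] less2[OF a2]
      unfolding th ws by (auto simp: rotf_def mult.commute)
    then show ?thesis using True by (simp add: phi_def xd)
  qed
  finally show ?thesis .
qed

fun prepk :: "(nat \<Rightarrow> real) \<Rightarrow> nat \<Rightarrow> nat \<Rightarrow> gate list" where
  "prepk \<psi> m 0 = []"
| "prepk \<psi> m (Suc k) = prepk \<psi> m k @ stage \<psi> m (m - Suc k)"

lemma prepk_valid: "k \<le> m \<Longrightarrow> valid_circuit m (prepk \<psi> m k)"
proof (induction k)
  case 0 then show ?case by (simp add: valid_circuit_def)
next
  case (Suc k)
  then have "valid_circuit m (stage \<psi> m (m - Suc k))" by (intro stage_valid) simp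
  then show ?case using Suc by (auto simp: valid_circuit_def)
qed

lemma prepk_length: "k \<le> m \<Longrightarrow> length (prepk \<psi> m k) + 3 \<le> 3 * 2^k"
proof (induction k)
  case 0 then show ?case by simp
next
  case (Suc k)
  have "m - Suc (m - Suc k) = k" using Suc.prems by simp
  then have "length (stage \<psi> m (m - Suc k)) + 2 = 3 * 2^k" using stage_length[of \<psi> m "m - Suc k"] by simp
  then show ?case using Suc by simp
qed

lemma prepk_correct:
  assumes m: "0 < m" and norm: "(\<Sum>j<2^m. (\<psi> j)\<^sup>2) = 1"
  shows "k \<le> m \<Longrightarrow> x < 2^m \<Longrightarrow> csem (prepk \<psi> m k) (\<lambda>y. if y = 0 then 1 else 0) x = phi \<psi> (m - k) x"
proof (induction k arbitrary: x)
  case 0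
  have "W \<psi> m 0 = 1" using m norm by (simp add: W_def Ssq_def)
  then show ?case using 0 by (simp add: phi_def)
next
  case (Suc k)
  define t where "t = m - Suc k"
  have t: "t < m" and st: "Suc t = m - k" using Suc.prems unfolding t_def by auto
  have wf: "\<forall>g\<in>set (stage \<psi> m t). wf_gate m g"
    using stage_valid[OF t] valid_wf by (auto simp: valid_circuit_def)
  have "csem (prepk \<psi> m (Suc k)) (\<lambda>y. if y = 0 then 1 else 0) x
      = csem (stage \<psi> m t) (csem (prepk \<psi> m k) (\<lambda>y. if y = 0 then 1 else 0)) x"
    by (simp add: t_def)
  also have "\<dots> = csem (stage \<psi> m t) (phi \<psi> (Suc t)) x"
    by (rule csem_local[OF wf Suc.prems(2)]) (simp add: st Suc.IH Suc.prems(1) Suc_leD)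
  also have "\<dots> = phi \<psi> t x" by (rule stage_correct[OF t Suc.prems(2)])
  finally show ?case by (simp add: t_def)
qed

lemma prep_exists:
  assumes m: "0 < m" and norm: "(\<Sum>j<2^m. (\<psi> j)\<^sup>2) = 1"
  shows "\<exists>gs. valid_circuit m gs \<and> length gs \<le> 3 * 2^m \<and>
     (\<forall>x<2^m. csem gs (\<lambda>y. if y = 0 then 1 else 0) x = complex_of_real (\<psi> x))"
proof (intro exI conjI allI impI)
  show "valid_circuit m (prepk \<psi> m m)" by (rule prepk_valid) simp
  show "length (prepk \<psi> m m) \<le> 3 * 2^m" using prepk_length[of m m \<psi>] by simp
  fix x :: nat assume x: "x < 2^m"
  show "csem (prepk \<psi> m m) (\<lambda>y. if y = 0 then 1 else 0) x = complex_of_real (\<psi> x)"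
    using prepk_correct[OF m norm order_refl x] by (simp add: phi_def W_def)
qed



lemma prep_package:
  assumes m: "0 < m" and norm: "(\<Sum>j<2^m. (\<psi> j)\<^sup>2) = 1"
  shows "\<exists>P gs. unitary_mat (2^m) P \<and> P *\<^sub>v unit_vec (2^m) 0 = vec (2^m) (\<lambda>x. complex_of_real (\<psi> x)) \<and>
     (\<forall>k. executes_borrowed m k gs P \<and> executes_ancilla m k gs P) \<and> length gs \<le> 3 * 2^m"
proof -
  obtain gs where v: "valid_circuit m gs" and l: "length gs \<le> 3 * 2^m"
    and c: "\<forall>x<2^m. csem gs (\<lambda>y. if y = 0 then 1 else 0) x = complex_of_real (\<psi> x)"
    using prep_exists[OF m norm] by blast
  have wf: "\<forall>g\<in>set gs. wf_gate m g" using v valid_wf by (auto simp: valid_circuit_def)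
  have "circuit_mat m gs *\<^sub>v unit_vec (2^m) 0 = vec (2^m) (csem gs (($) (unit_vec (2^m) 0)))"
    by (rule circuit_vec[OF wf]) simp
  also have "\<dots> = vec (2^m) (\<lambda>x. complex_of_real (\<psi> x))"
  proof (intro eq_vecI)
    fix x assume "x < dim_vec (vec (2^m) (\<lambda>x. complex_of_real (\<psi> x)))"
    then have x: "x < 2^m" by simp
    have "csem gs (($) (unit_vec (2^m) 0)) x = csem gs (\<lambda>y. if y = 0 then 1 else 0) x"
      by (rule csem_local[OF wf x]) (simp add: unit_vec_def)
    then show "vec (2^m) (csem gs (($) (unit_vec (2^m) 0))) $ x = vec (2^m) (\<lambda>x. complex_of_real (\<psi> x)) $ x"
      using c x by simp
  qed simp
  finally show ?thesis
    using circuit_unitary[OF v] exec_borrowed[OF v] exec_ancilla[OF v] l by blast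
qed

lemma unprep_package:
  assumes m: "0 < m" and norm: "(\<Sum>j<2^m. (\<psi> j)\<^sup>2) = 1"
  shows "\<exists>Q gs. unitary_mat (2^m) Q \<and> cadj Q *\<^sub>v unit_vec (2^m) 0 = vec (2^m) (\<lambda>x. complex_of_real (\<psi> x)) \<and>
     (\<forall>k. executes_ancilla m k gs Q) \<and> length gs \<le> 3 * 2^m"
proof -
  obtain gs where v: "valid_circuit m gs" and l: "length gs \<le> 3 * 2^m"
    and c: "\<forall>x<2^m. csem gs (\<lambda>y. if y = 0 then 1 else 0) x = complex_of_real (\<psi> x)"
    using prep_exists[OF m norm] by blast
  have wf: "\<forall>g\<in>set gs. wf_gate m g" using v valid_wf by (auto simp: valid_circuit_def)
  have "circuit_mat m gs *\<^sub>v unit_vec (2^m) 0 = vec (2^m) (csem gs (($) (unit_vec (2^m) 0)))"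
    by (rule circuit_vec[OF wf]) simp
  also have "\<dots> = vec (2^m) (\<lambda>x. complex_of_real (\<psi> x))"
  proof (intro eq_vecI)
    fix x assume "x < dim_vec (vec (2^m) (\<lambda>x. complex_of_real (\<psi> x)))"
    then have x: "x < 2^m" by simp
    have "csem gs (($) (unit_vec (2^m) 0)) x = csem gs (\<lambda>y. if y = 0 then 1 else 0) x"
      by (rule csem_local[OF wf x]) (simp add: unit_vec_def)
    then show "vec (2^m) (csem gs (($) (unit_vec (2^m) 0))) $ x = vec (2^m) (\<lambda>x. complex_of_real (\<psi> x)) $ x"
      using c x by simp
  qed simp
  finally have P: "circuit_mat m gs *\<^sub>v unit_vec (2^m) 0 = vec (2^m) (\<lambda>x. complex_of_real (\<psi> x))" .
  define gs' where "gs' = rev (map adjg gs)"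
  have v': "valid_circuit m gs'" using v valid_adjg by (auto simp: valid_circuit_def gs'_def)
  have Q: "circuit_mat m gs' = cadj (circuit_mat m gs)" unfolding gs'_def by (rule circuit_adj[OF wf, symmetric])
  have "cadj (circuit_mat m gs') = circuit_mat m gs" unfolding Q by (rule cadj_cadj)
  moreover have "length gs' \<le> 3 * 2^m" using l by (simp add: gs'_def)
  ultimately show ?thesis
    using circuit_unitary[OF v'] exec_ancilla[OF v'] P by metis
qed

lemma m_bounds:
  assumes M: "2 \<le> M"
  shows "0 < nat \<lceil>log 2 (real M)\<rceil> \<and> M \<le> 2 ^ nat \<lceil>log 2 (real M)\<rceil> \<and> 2 ^ nat \<lceil>log 2 (real M)\<rceil> < 2 * M"
proof -
  define l where "l = log 2 (real M)"
  define m where "m = nat \<lceil>l\<rceil>"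
  have Mr: "real M \<ge> 2" using M by simp
  have l1: "l \<ge> 1" unfolding l_def using Mr by simp
  have cl: "\<lceil>l\<rceil> \<ge> 1" using l1 by linarith
  have rm: "real m = of_int \<lceil>l\<rceil>" unfolding m_def using cl by simp
  have m0: "0 < m" unfolding m_def using cl by simp
  have pM: "2 powr l = real M" unfolding l_def using Mr by simp
  have "real M \<le> 2 powr (real m)"
    unfolding pM[symmetric] rm by (rule powr_mono) (auto simp: le_of_int_ceiling)
  then have a: "real M \<le> real (2 ^ m)" by (simp add: powr_realpow)
  have "real m < l + 1" unfolding rm using ceiling_correct[of l] by linarith
  then have "2 powr (real m) < 2 powr (l + 1)" by simp
  also have "\<dots> = 2 * real M" using pM by (simp add: powr_add)
  finally have b: "real (2 ^ m) < real (2 * M)" by (simp add: powr_realpow)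
  show ?thesis using m0 a b unfolding m_def l_def by (simp only: of_nat_le_iff of_nat_less_iff)
qed



lemma sum_pad: "M \<le> N \<Longrightarrow> (\<Sum>j<N. (if j < M then g j else 0)) = (\<Sum>j<M. g (j::nat) :: real)"
  by (rule sum.mono_neutral_cong_right) auto

lemma pad_vec_eq: "vec (2^m) (\<lambda>x. complex_of_real (if x < M then f x else 0)) = padded_vec m M (\<lambda>l. complex_of_real (f l))"
  unfolding padded_vec_def by (intro eq_vecI) auto

theorem lemma5:
  "\<exists>c::real. \<forall>(M::nat) (h::nat \<Rightarrow> real).
     M > 0 \<longrightarrow> even M \<longrightarrow> wavelet_filter M h \<longrightarrow>
     (let m = nat \<lceil>log 2 (real M)\<rceil>; hs = (\<Sum>l<M. \<bar>h l\<bar>) in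
       (\<exists>LINPREP gs. unitary_mat (2 ^ m) LINPREP \<and>
          LINPREP *\<^sub>v unit_vec (2 ^ m) 0 = padded_vec m M (\<lambda>l. complex_of_real (h l)) \<and>
          executes_borrowed m m gs LINPREP \<and>
          real (length gs) \<le> c * real M * log 2 (real M)) \<and>
       (\<exists>PREP gs. unitary_mat (2 ^ m) PREP \<and>
          PREP *\<^sub>v unit_vec (2 ^ m) 0
            = padded_vec m M (\<lambda>l. complex_of_real (sqrt \<bar>h l\<bar> / sqrt hs)) \<and>
          executes_ancilla m 1 gs PREP \<and>
          real (length gs) \<le> c * real M powr (3/2)) \<and>
       (\<exists>UNPREP gs. unitary_mat (2 ^ m) UNPREP \<and>
          cadj UNPREP *\<^sub>v unit_vec (2 ^ m) 0
            = padded_vec m M (\<lambda>l. complex_of_real (sgn (h l) * sqrt \<bar>h l\<bar> / sqrt hs)) \<and>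
          executes_ancilla m 1 gs UNPREP \<and>
          real (length gs) \<le> c * real M powr (3/2)))"
proof (intro exI[of _ 6] allI impI)
  fix M :: nat and h :: "nat \<Rightarrow> real"
  assume M0: "M > 0" and ev: "even M" and wfl: "wavelet_filter M h"
  have M2: "2 \<le> M" using M0 ev by presburger
  define m where "m = nat \<lceil>log 2 (real M)\<rceil>"
  define hs where "hs = (\<Sum>l<M. \<bar>h l\<bar>)"
  have mb: "0 < m" "M \<le> 2^m" "2^m < 2 * M" using m_bounds[OF M2] unfolding m_def by auto
  have sq: "(\<Sum>l<M. (h l)\<^sup>2) = 1" and sh: "(\<Sum>l<M. h l) = sqrt 2"
    using wfl by (auto simp: wavelet_filter_def)
  have "sqrt 2 \<le> hs" unfolding hs_def sh[symmetric] by (rule order_trans[OF abs_ge_self sum_abs])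
  then have hs0: "hs > 0" by (smt (verit) real_sqrt_gt_zero)
  have Mr: "real M \<ge> 2" using M2 by simp
  have lenb: "real (3 * 2^m) \<le> 6 * real M"
  proof -
    have "3 * 2^m \<le> 6 * M" using mb(3) by linarith
    then show ?thesis by (metis of_nat_le_iff of_nat_mult of_nat_numeral)
  qed
  have lg: "log 2 (real M) \<ge> 1" using Mr by simp
  have b1: "6 * real M \<le> 6 * real M * log 2 (real M)" using lg Mr by simp
  have "real M powr 1 \<le> real M powr (3/2)" using Mr by (intro powr_mono) auto
  then have b2: "6 * real M \<le> 6 * real M powr (3/2)" using Mr by simp
  define \<psi>1 where "\<psi>1 = (\<lambda>j. if j < M then h j else 0)"
  have n1: "(\<Sum>j<2^m. (\<psi>1 j)\<^sup>2) = 1"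
  proof -
    have "(\<Sum>j<2^m. (\<psi>1 j)\<^sup>2) = (\<Sum>j<2^m. (if j < M then (h j)\<^sup>2 else 0))"
      by (rule sum.cong) (auto simp: \<psi>1_def)
    also have "\<dots> = 1" using sum_pad[OF mb(2)] sq by simp
    finally show ?thesis .
  qed
  obtain P1 gs1 where P1: "unitary_mat (2^m) P1" "P1 *\<^sub>v unit_vec (2^m) 0 = vec (2^m) (\<lambda>x. complex_of_real (\<psi>1 x))"
    "\<forall>k. executes_borrowed m k gs1 P1 \<and> executes_ancilla m k gs1 P1" "length gs1 \<le> 3 * 2^m"
    using prep_package[OF mb(1) n1] by blast
  define \<psi>2 where "\<psi>2 = (\<lambda>j. if j < M then sqrt \<bar>h j\<bar> / sqrt hs else 0)"
  have n2: "(\<Sum>j<2^m. (\<psi>2 j)\<^sup>2) = 1"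
  proof -
    have "(\<Sum>j<2^m. (\<psi>2 j)\<^sup>2) = (\<Sum>j<2^m. (if j < M then \<bar>h j\<bar> / hs else 0))"
      using hs0 by (intro sum.cong) (auto simp: \<psi>2_def power_divide)
    also have "\<dots> = (\<Sum>j<M. \<bar>h j\<bar> / hs)" by (rule sum_pad[OF mb(2)])
    also have "\<dots> = 1" using hs0 by (simp add: sum_divide_distrib[symmetric] hs_def)
    finally show ?thesis .
  qed
  obtain P2 gs2 where P2: "unitary_mat (2^m) P2" "P2 *\<^sub>v unit_vec (2^m) 0 = vec (2^m) (\<lambda>x. complex_of_real (\<psi>2 x))"
    "\<forall>k. executes_borrowed m k gs2 P2 \<and> executes_ancilla m k gs2 P2" "length gs2 \<le> 3 * 2^m"
    using prep_package[OF mb(1) n2] by blast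
  define \<psi>3 where "\<psi>3 = (\<lambda>j. if j < M then sgn (h j) * sqrt \<bar>h j\<bar> / sqrt hs else 0)"
  have sg: "(sgn a)\<^sup>2 * \<bar>a\<bar> = \<bar>a\<bar>" for a :: real
    by (cases "a = 0") (auto simp: sgn_if)
  have n3: "(\<Sum>j<2^m. (\<psi>3 j)\<^sup>2) = 1"
  proof -
    have "(\<Sum>j<2^m. (\<psi>3 j)\<^sup>2) = (\<Sum>j<2^m. (if j < M then \<bar>h j\<bar> / hs else 0))"
      using hs0 by (intro sum.cong) (auto simp: \<psi>3_def power_divide power_mult_distrib sg)
    also have "\<dots> = (\<Sum>j<M. \<bar>h j\<bar> / hs)" by (rule sum_pad[OF mb(2)])
    also have "\<dots> = 1" using hs0 by (simp add: sum_divide_distrib[symmetric] hs_def)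
    finally show ?thesis .
  qed
  obtain Q3 gs3 where Q3: "unitary_mat (2^m) Q3" "cadj Q3 *\<^sub>v unit_vec (2^m) 0 = vec (2^m) (\<lambda>x. complex_of_real (\<psi>3 x))"
    "\<forall>k. executes_ancilla m k gs3 Q3" "length gs3 \<le> 3 * 2^m"
    using unprep_package[OF mb(1) n3] by blast
  have L1: "real (length gs1) \<le> 6 * real M * log 2 (real M)"
    using P1(4) lenb b1 by (smt (verit) of_nat_le_iff)
  have L2: "real (length gs2) \<le> 6 * real M powr (3/2)"
    using P2(4) lenb b2 by (smt (verit) of_nat_le_iff)
  have L3: "real (length gs3) \<le> 6 * real M powr (3/2)"
    using Q3(4) lenb b2 by (smt (verit) of_nat_le_iff)
  show "let m = nat \<lceil>log 2 (real M)\<rceil>; hs = (\<Sum>l<M. \<bar>h l\<bar>) in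
       (\<exists>LINPREP gs. unitary_mat (2 ^ m) LINPREP \<and>
          LINPREP *\<^sub>v unit_vec (2 ^ m) 0 = padded_vec m M (\<lambda>l. complex_of_real (h l)) \<and>
          executes_borrowed m m gs LINPREP \<and>
          real (length gs) \<le> 6 * real M * log 2 (real M)) \<and>
       (\<exists>PREP gs. unitary_mat (2 ^ m) PREP \<and>
          PREP *\<^sub>v unit_vec (2 ^ m) 0
            = padded_vec m M (\<lambda>l. complex_of_real (sqrt \<bar>h l\<bar> / sqrt hs)) \<and>
          executes_ancilla m 1 gs PREP \<and>
          real (length gs) \<le> 6 * real M powr (3/2)) \<and>
       (\<exists>UNPREP gs. unitary_mat (2 ^ m) UNPREP \<and>
          cadj UNPREP *\<^sub>v unit_vec (2 ^ m) 0
            = padded_vec m M (\<lambda>l. complex_of_real (sgn (h l) * sqrt \<bar>h l\<bar> / sqrt hs)) \<and>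
          executes_ancilla m 1 gs UNPREP \<and>
          real (length gs) \<le> 6 * real M powr (3/2))"
    unfolding Let_def m_def[symmetric] hs_def[symmetric]
  proof (intro conjI)
    show "\<exists>LINPREP gs. unitary_mat (2 ^ m) LINPREP \<and>
          LINPREP *\<^sub>v unit_vec (2 ^ m) 0 = padded_vec m M (\<lambda>l. complex_of_real (h l)) \<and>
          executes_borrowed m m gs LINPREP \<and>
          real (length gs) \<le> 6 * real M * log 2 (real M)"
      using P1 L1 pad_vec_eq[of m M h] unfolding \<psi>1_def by metis
    show "\<exists>PREP gs. unitary_mat (2 ^ m) PREP \<and>
          PREP *\<^sub>v unit_vec (2 ^ m) 0
            = padded_vec m M (\<lambda>l. complex_of_real (sqrt \<bar>h l\<bar> / sqrt hs)) \<and>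
          executes_ancilla m 1 gs PREP \<and>
          real (length gs) \<le> 6 * real M powr (3/2)"
      using P2 L2 pad_vec_eq[of m M "\<lambda>l. sqrt \<bar>h l\<bar> / sqrt hs"] unfolding \<psi>2_def by metis
    show "\<exists>UNPREP gs. unitary_mat (2 ^ m) UNPREP \<and>
          cadj UNPREP *\<^sub>v unit_vec (2 ^ m) 0
            = padded_vec m M (\<lambda>l. complex_of_real (sgn (h l) * sqrt \<bar>h l\<bar> / sqrt hs)) \<and>
          executes_ancilla m 1 gs UNPREP \<and>
          real (length gs) \<le> 6 * real M powr (3/2)"
      using Q3 L3 pad_vec_eq[of m M "\<lambda>l. sgn (h l) * sqrt \<bar>h l\<bar> / sqrt hs"] unfolding \<psi>3_def by metis
  qed
qed

end
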